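(* Let $G=(V,E)$ be a circular arc graph which is not an interval graph, let $M=(C,\mathcal A)$ be a circular arc model of $G$, let $p$ be any point of $C$, let $A$ be the set of vertices whose arcs contain $p$, and let $B=V\setminus A$. Let $G'=(V,E')$ with $E'=E\cup\{\{u',v'\}: u',v'\in B,\ u'\neq v'\}$. Then $G'$ is a co-bipartite circular arc graph.
   Context: A circular arc model $M=(C,\mathcal A)$ of $G$ consists of a circle $C$ and arcs of $C$, one per vertex, such that two vertices are adjacent iff their arcs intersect; a circular arc graph is a graph having such a model. An interval graph is the intersection graph of a finite family of intervals of the real line. A graph is co-bipartite if its vertex set can be partitioned into two cliques. *)

theory Defs
  imports Complex_Main
begin

definition simple_graph :: "'a set \<Rightarrow> 'a set set \<Rightarrow> bool" where
  "simple_graph V E \<longleftrightarrow> finite V \<and> (\<forall>e\<in>E. e \<subseteq> V \<and> card e = 2)"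

text \<open>The circle C is modelled as R/Z, with points represented in [0,1).
  A (closed) arc from a to b (a \<le> b) is the image of the real interval [a,b]
  under the quotient map x \<mapsto> frac x.\<close>
definition circle :: "real set" where
  "circle = {0..<1}"

definition carc :: "real \<Rightarrow> real \<Rightarrow> real set" where
  "carc a b = frac ` {a..b}"

definition ca_model :: "'a set \<Rightarrow> 'a set set \<Rightarrow> ('a \<Rightarrow> real) \<Rightarrow> ('a \<Rightarrow> real) \<Rightarrow> bool" where
  "ca_model V E l r \<longleftrightarrow> (\<forall>v\<in>V. l v \<le> r v) \<and>
     (\<forall>u\<in>V. \<forall>v\<in>V. u \<noteq> v \<longrightarrow>
        ({u, v} \<in> E \<longleftrightarrow> carc (l u) (r u) \<inter> carc (l v) (r v) \<noteq> {}))"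

definition circular_arc_graph :: "'a set \<Rightarrow> 'a set set \<Rightarrow> bool" where
  "circular_arc_graph V E \<longleftrightarrow> simple_graph V E \<and> (\<exists>l r. ca_model V E l r)"

definition interval_graph :: "'a set \<Rightarrow> 'a set set \<Rightarrow> bool" where
  "interval_graph V E \<longleftrightarrow> simple_graph V E \<and> (\<exists>l r :: 'a \<Rightarrow> real.
     (\<forall>v\<in>V. l v \<le> r v) \<and>
     (\<forall>u\<in>V. \<forall>v\<in>V. u \<noteq> v \<longrightarrow>
        ({u, v} \<in> E \<longleftrightarrow> {l u..r u} \<inter> {l v..r v} \<noteq> {})))"

definition is_clique :: "'a set set \<Rightarrow> 'a set \<Rightarrow> bool" where
  "is_clique E K \<longleftrightarrow> (\<forall>u\<in>K. \<forall>v\<in>K. u \<noteq> v \<longrightarrow> {u, v} \<in> E)"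

definition co_bipartite :: "'a set \<Rightarrow> 'a set set \<Rightarrow> bool" where
  "co_bipartite V E \<longleftrightarrow> simple_graph V E \<and>
     (\<exists>X Y. X \<union> Y = V \<and> X \<inter> Y = {} \<and> is_clique E X \<and> is_clique E Y)"

end

theory Submission
  imports Defs
begin

definition II :: "real \<Rightarrow> real \<Rightarrow> real \<Rightarrow> real \<Rightarrow> bool" where
  "II a b c d \<longleftrightarrow> (\<exists>m::int. a \<le> d + of_int m \<and> c + of_int m \<le> b)"

lemma carc_inter:
  assumes "a \<le> b" "c \<le> d"
  shows "carc a b \<inter> carc c d \<noteq> {} \<longleftrightarrow> II a b c d"
proof
  assume "carc a b \<inter> carc c d \<noteq> {}"
  then obtain z where "z \<in> carc a b" "z \<in> carc c d" by blast
  then obtain u w where u: "u \<in> {a..b}" and w: "w \<in> {c..d}" and f: "frac u = frac w"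
    unfolding carc_def by (metis imageE)
  have "u - w = of_int (\<lfloor>u\<rfloor> - \<lfloor>w\<rfloor>)" using f by (simp add: frac_def)
  then show "II a b c d" unfolding II_def using u w
    by (intro exI[of _ "\<lfloor>u\<rfloor> - \<lfloor>w\<rfloor>"]) auto
next
  assume "II a b c d"
  then obtain m :: int where m: "a \<le> d + of_int m" "c + of_int m \<le> b" unfolding II_def by auto
  define u where "u = max a (c + of_int m)"
  have u: "u \<in> {a..b}" using m assms by (auto simp: u_def)
  have w: "u - of_int m \<in> {c..d}" using m assms by (auto simp: u_def)
  have "frac u = frac (u - of_int m)"
    by (metis diff_add_cancel frac_add_of_int_right)
  then have "frac u \<in> carc a b \<inter> carc c d" using u w unfolding carc_def
    by (metis IntI image_eqI)
  then show "carc a b \<inter> carc c d \<noteq> {}" by auto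
qed

lemma carc_mem:
  assumes "0 \<le> p" "p < 1"
  shows "p \<in> carc a b \<longleftrightarrow> (\<exists>k::int. a \<le> p + of_int k \<and> p + of_int k \<le> b)"
proof
  assume "p \<in> carc a b"
  then obtain u where u: "u \<in> {a..b}" "p = frac u" unfolding carc_def by auto
  then have "u = p + of_int \<lfloor>u\<rfloor>" by (simp add: frac_def)
  then show "\<exists>k::int. a \<le> p + of_int k \<and> p + of_int k \<le> b" using u by (metis atLeastAtMost_iff)
next
  assume "\<exists>k::int. a \<le> p + of_int k \<and> p + of_int k \<le> b"
  then obtain k :: int where k: "a \<le> p + of_int k" "p + of_int k \<le> b" by auto
  have "frac (p + of_int k) = p" using assms by simp
  then show "p \<in> carc a b" unfolding carc_def using k by (metis atLeastAtMost_iff image_eqI)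
qed

lemma II_point:
  assumes "a \<le> q + of_int i" "q + of_int i \<le> b" "c \<le> q + of_int j" "q + of_int j \<le> d"
  shows "II a b c d"
  unfolding II_def using assms by (intro exI[of _ "i - j"]) auto

lemma II_whole:
  assumes "1 \<le> b - a" "c \<le> d"
  shows "II a b c d"
proof -
  have "of_int \<lceil>a - d\<rceil> < a - d + 1" "a - d \<le> of_int \<lceil>a - d\<rceil>" by linarith+
  then show ?thesis unfolding II_def using assms by (intro exI[of _ "\<lceil>a - d\<rceil>"]) linarith
qed

lemma II_sym: "II a b c d = II c d a b"
  unfolding II_def
  by (metis (no_types, opaque_lifting) add.commute add_le_cancel_left diff_add_cancel le_diff_eq
      of_int_minus uminus_add_conv_diff)

lemma II_AB:
  fixes i j :: int
  assumes "0 < s" "s \<le> t" "t < 1" "0 \<le> x" "0 \<le> y" "x + y < 1"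
  shows "II (p+s+of_int i) (p+t+of_int i) (p-x+of_int j) (p+y+of_int j) \<longleftrightarrow> (s \<le> y \<or> 1-x \<le> t)"
proof
  assume "II (p+s+of_int i) (p+t+of_int i) (p-x+of_int j) (p+y+of_int j)"
  then obtain m :: int where m: "p+s+of_int i \<le> p+y+of_int j + of_int m"
     "p-x+of_int j + of_int m \<le> p+t+of_int i" unfolding II_def by auto
  define n where "n = j + m - i"
  have n1: "s \<le> y + of_int n" and n2: "-x + of_int n \<le> t" using m by (auto simp: n_def)
  have "n \<le> -1 \<or> n \<ge> 2 \<or> n = 0 \<or> n = 1" by linarith
  moreover have "\<not> n \<le> -1"
  proof
    assume "n \<le> -1" then have "real_of_int n \<le> -1" by simp
    then show False using n1 assms by linarith
  qed
  moreover have "\<not> n \<ge> 2"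
  proof
    assume "n \<ge> 2" then have "real_of_int n \<ge> 2" by simp
    then show False using n2 assms by linarith
  qed
  ultimately show "s \<le> y \<or> 1-x \<le> t" using n1 n2 by auto
next
  assume "s \<le> y \<or> 1-x \<le> t"
  then show "II (p+s+of_int i) (p+t+of_int i) (p-x+of_int j) (p+y+of_int j)"
  proof
    assume "s \<le> y" then show ?thesis using assms unfolding II_def by (intro exI[of _ "i - j"]) auto
  next
    assume "1 - x \<le> t" then show ?thesis using assms unfolding II_def by (intro exI[of _ "i - j + 1"]) auto
  qed
qed

theorem lemma6:
  fixes V :: "'a set" and E :: "'a set set" and l r :: "'a \<Rightarrow> real" and p :: real
    and B :: "'a set"
  assumes "circular_arc_graph V E"
    and "\<not> interval_graph V E"
    and "ca_model V E l r"
    and "p \<in> circle"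
    and "B = V - {v \<in> V. p \<in> carc (l v) (r v)}"
  shows "co_bipartite V (E \<union> {{u', v'} | u' v'. u' \<in> B \<and> v' \<in> B \<and> u' \<noteq> v'})
       \<and> circular_arc_graph V (E \<union> {{u', v'} | u' v'. u' \<in> B \<and> v' \<in> B \<and> u' \<noteq> v'})"
proof -
  define E' where "E' = E \<union> {{u', v'} | u' v'. u' \<in> B \<and> v' \<in> B \<and> u' \<noteq> v'}"
  define A where "A = {v \<in> V. p \<in> carc (l v) (r v)}"
  have BA: "B = V - A" using assms(5) A_def by simp
  have p01: "0 \<le> p" "p < 1" using assms(4) by (auto simp: circle_def)
  have lr: "\<And>v. v \<in> V \<Longrightarrow> l v \<le> r v" using assms(3) by (auto simp: ca_model_def)
  have edge: "\<And>u v. u \<in> V \<Longrightarrow> v \<in> V \<Longrightarrow> u \<noteq> v \<Longrightarrow> {u,v} \<in> E \<longleftrightarrow> II (l u) (r u) (l v) (r v)"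
  proof -
    fix u v assume uv: "u \<in> V" "v \<in> V" "u \<noteq> v"
    have "\<forall>u\<in>V. \<forall>v\<in>V. u \<noteq> v \<longrightarrow>
        ({u, v} \<in> E \<longleftrightarrow> carc (l u) (r u) \<inter> carc (l v) (r v) \<noteq> {})"
      using assms(3) unfolding ca_model_def by (elim conjE)
    then have "{u, v} \<in> E \<longleftrightarrow> carc (l u) (r u) \<inter> carc (l v) (r v) \<noteq> {}"
      using uv by simp
    then show "{u,v} \<in> E \<longleftrightarrow> II (l u) (r u) (l v) (r v)"
      using carc_inter[OF lr[OF uv(1)] lr[OF uv(2)]] by simp
  qed
  have sg: "simple_graph V E" using assms(1) by (simp add: circular_arc_graph_def)
  have E'iff: "\<And>u v. u \<noteq> v \<Longrightarrow> {u,v} \<in> E' \<longleftrightarrow> {u,v} \<in> E \<or> (u \<in> B \<and> v \<in> B)"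
    unfolding E'_def by (auto simp: doubleton_eq_iff)
  have sg': "simple_graph V E'"
    using sg BA unfolding simple_graph_def E'_def by auto
  have Amem: "\<And>v. v \<in> A \<Longrightarrow> \<exists>k::int. l v \<le> p + of_int k \<and> p + of_int k \<le> r v"
    using carc_mem[OF p01] A_def by auto
  have Bnmem: "\<And>v. v \<in> B \<Longrightarrow> \<not> (\<exists>k::int. l v \<le> p + of_int k \<and> p + of_int k \<le> r v)"
    using carc_mem[OF p01] A_def BA by auto
  define kA where "kA v = (SOME k::int. l v \<le> p + of_int k \<and> p + of_int k \<le> r v)" for v
  have kA: "\<And>v. v \<in> A \<Longrightarrow> l v \<le> p + of_int (kA v) \<and> p + of_int (kA v) \<le> r v"
    unfolding kA_def using Amem by (rule someI_ex)
  define kB where "kB v = \<lceil>l v - p\<rceil> - 1" for v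
  define s where "s v = l v - p - of_int (kB v)" for v
  define t where "t v = r v - p - of_int (kB v)" for v
  have sB: "0 < s v \<and> s v \<le> t v \<and> t v < 1" if "v \<in> B" for v
  proof -
    have vV: "v \<in> V" using that BA by auto
    have c1: "of_int \<lceil>l v - p\<rceil> < l v - p + 1" "l v - p \<le> of_int \<lceil>l v - p\<rceil>" by linarith+
    have se: "s v = l v - p - of_int \<lceil>l v - p\<rceil> + 1" by (simp add: s_def kB_def)
    have s0: "0 < s v" "s v \<le> 1" using c1 unfolding se by linarith+
    have st: "s v \<le> t v" using lr[OF vV] by (simp add: s_def t_def)
    have "t v < 1"
    proof (rule ccontr)
      assume "\<not> t v < 1"
      then have "l v \<le> p + of_int (kB v + 1) \<and> p + of_int (kB v + 1) \<le> r v"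
        using s0 by (auto simp: s_def t_def)
      then show False using Bnmem[OF that] by blast
    qed
    then show ?thesis using s0 st by auto
  qed
  define x where "x v = p + of_int (kA v) - l v" for v
  define y where "y v = r v - p - of_int (kA v)" for v
  have xA: "0 \<le> x v \<and> 0 \<le> y v \<and> x v + y v = r v - l v" if "v \<in> A" for v
    using kA[OF that] by (auto simp: x_def y_def)
  define l' where "l' v = (if v \<in> B then p + s v / 2 else if 1 \<le> r v - l v then p else p - x v / 2)" for v
  define r' where "r' v = (if v \<in> B then p + (1 + t v) / 2 else if 1 \<le> r v - l v then p + 1 else p + y v / 2)" for v
  have lr': "l' v \<le> r' v" if "v \<in> V" for v
  proof (cases "v \<in> B")
    case True then show ?thesis using sB[OF True] by (simp add: l'_def r'_def)
  next
    case False then have "v \<in> A" using that BA by auto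
    then show ?thesis using xA[of v] False by (simp add: l'_def r'_def)
  qed
  have Ap: "l' v \<le> p \<and> p \<le> r' v" if "v \<in> A" for v
    using that xA[OF that] BA by (auto simp: l'_def r'_def)
  have Bq: "l' v \<le> p + 1/2 \<and> p + 1/2 \<le> r' v" if "v \<in> B" for v
    using that sB[OF that] by (auto simp: l'_def r'_def)
  have AB: "II (l u) (r u) (l v) (r v) \<longleftrightarrow> II (l' u) (r' u) (l' v) (r' v)" if u: "u \<in> A" and v: "v \<in> B" for u v
  proof (cases "1 \<le> r u - l u")
    case True
    have "II (l u) (r u) (l v) (r v)" using II_whole True lr v BA by auto
    moreover have "II (l' u) (r' u) (l' v) (r' v)"
      using II_whole True u v BA lr'[of v] by (auto simp: l'_def r'_def)
    ultimately show ?thesis by simp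
  next
    case False
    have uB: "u \<notin> B" using u BA by auto
    have xy: "0 \<le> x u" "0 \<le> y u" "x u + y u < 1" using xA[OF u] False by auto
    note st = sB[OF v]
    have "II (l u) (r u) (l v) (r v) = II (l v) (r v) (l u) (r u)" by (rule II_sym)
    also have "\<dots> = II (p + s v + of_int (kB v)) (p + t v + of_int (kB v))
        (p - x u + of_int (kA u)) (p + y u + of_int (kA u))"
      by (simp add: s_def t_def x_def y_def)
    also have "\<dots> \<longleftrightarrow> (s v \<le> y u \<or> 1 - x u \<le> t v)"
      using II_AB st xy by blast
    also have "\<dots> \<longleftrightarrow> (s v / 2 \<le> y u / 2 \<or> 1 - x u / 2 \<le> (1 + t v) / 2)" by auto
    also have "\<dots> \<longleftrightarrow> II (p + s v / 2 + of_int 0) (p + (1 + t v) / 2 + of_int 0)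
        (p - x u / 2 + of_int 0) (p + y u / 2 + of_int 0)"
      by (rule II_AB[symmetric]) (use st xy in auto)
    also have "\<dots> = II (l' v) (r' v) (l' u) (r' u)"
      using v uB False by (simp add: l'_def r'_def)
    also have "\<dots> = II (l' u) (r' u) (l' v) (r' v)" by (rule II_sym)
    finally show ?thesis .
  qed
  have model: "ca_model V E' l' r'"
    unfolding ca_model_def
  proof (intro conjI ballI impI)
    fix v assume "v \<in> V" then show "l' v \<le> r' v" by (rule lr')
  next
    fix u v assume uV: "u \<in> V" and vV: "v \<in> V" and uv: "u \<noteq> v"
    have "{u, v} \<in> E' \<longleftrightarrow> II (l' u) (r' u) (l' v) (r' v)"
    proof (cases "u \<in> B")
      case uB: True
      show ?thesis
      proof (cases "v \<in> B")
        case True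
        then show ?thesis using uB uv E'iff II_point[of _ "p + 1/2" 0 _ _ 0] Bq by force
      next
        case False
        then have vA: "v \<in> A" using vV BA by auto
        have "{u,v} \<in> E' \<longleftrightarrow> {v,u} \<in> E" using E'iff[OF uv] False by (simp add: insert_commute)
        also have "\<dots> \<longleftrightarrow> II (l v) (r v) (l u) (r u)" using edge vV uV uv by auto
        also have "\<dots> \<longleftrightarrow> II (l' v) (r' v) (l' u) (r' u)" using AB vA uB by blast
        finally show ?thesis using II_sym by blast
      qed
    next
      case uA': False
      then have uA: "u \<in> A" using uV BA by auto
      show ?thesis
      proof (cases "v \<in> B")
        case True
        have "{u,v} \<in> E' \<longleftrightarrow> {u,v} \<in> E" using E'iff[OF uv] uA' by simp
        also have "\<dots> \<longleftrightarrow> II (l u) (r u) (l v) (r v)" using edge vV uV uv by auto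
        also have "\<dots> \<longleftrightarrow> II (l' u) (r' u) (l' v) (r' v)" using AB uA True by blast
        finally show ?thesis .
      next
        case False
        then have vA: "v \<in> A" using vV BA by auto
        have "II (l u) (r u) (l v) (r v)"
          using kA[OF uA] kA[OF vA] II_point by blast
        then have "{u,v} \<in> E'" using edge uV vV uv E'iff by blast
        moreover have "II (l' u) (r' u) (l' v) (r' v)"
          using Ap[OF uA] Ap[OF vA] II_point[of _ p 0 _ _ 0] by simp
        ultimately show ?thesis by simp
      qed
    qed
    then show "{u, v} \<in> E' \<longleftrightarrow> carc (l' u) (r' u) \<inter> carc (l' v) (r' v) \<noteq> {}"
      using carc_inter lr' uV vV by blast
  qed
  have cliqueA: "is_clique E' A"
    unfolding is_clique_def
  proof (intro ballI impI)
    fix u v assume uA: "u \<in> A" and vA: "v \<in> A" and uv: "u \<noteq> v"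
    have "II (l u) (r u) (l v) (r v)" using kA[OF uA] kA[OF vA] II_point by blast
    then show "{u,v} \<in> E'" using edge uA vA uv E'iff A_def by blast
  qed
  have cliqueB: "is_clique E' B" unfolding is_clique_def using E'iff by blast
  have "co_bipartite V E'"
    unfolding co_bipartite_def using sg' cliqueA cliqueB BA A_def
    by (intro conjI exI[of _ A] exI[of _ B]) auto
  moreover have "circular_arc_graph V E'"
    unfolding circular_arc_graph_def using sg' model by blast
  ultimately show ?thesis unfolding E'_def by blast
qed

end
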